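(* Let $0\to V\to\widehat A\xrightarrow{j}A\to0$ be an abelian extension of a Com-PreLie algebra $A$ by a representation $(V,\mu,l,r)$ inducing that representation, let $s$ be a linear section of $j$, and let $(\phi,\psi)$ be the 2-cocycle $\phi(x,y)=s(x)\ast_{\widehat A}s(y)-s(x\ast y)$, $\psi(x,y)=s(x)\bullet_{\widehat A}s(y)-s(x\bullet y)$. A pair $(\beta,\alpha)\in\mathrm{Aut}(V)\times\mathrm{Aut}(A)$ is inducible if and only if $(\beta,\alpha)\in\mathcal C$ and the 2-cocycles $(\phi,\psi)^{(\beta,\alpha)}$ and $(\phi,\psi)$ are cohomologous.
   Context: All vector spaces are over a field of characteristic $0$. A Com-PreLie algebra is a triple $(A,\ast,\bullet)$ where $A$ is a vector space, $\ast$ is a commutative associative bilinear product on $A$, and $\bullet$ is a bilinear product on $A$ satisfying the left pre-Lie identity $(x\bullet y)\bullet z-x\bullet(y\bullet z)=(y\bullet x)\bullet z-y\bullet(x\bullet z)$ and the compatibility $x\bullet(y\ast z)=(x\bullet y)\ast z+y\ast(x\bullet z)$ for all $x,y,z\in A$. A homomorphism of Com-PreLie algebras is a linear map preserving both products. A representation of $A$ is a quadruple $(V,\mu,l,r)$ with $V$ a vector space and $\mu,l,r:A\to\mathrm{End}(V)$ linear maps satisfying, for all $x,y\in A$: $\mu(x\ast y)=\mu(x)\mu(y)$; $l(x\bullet y)-l(x)l(y)=l(y\bullet x)-l(y)l(x)$; $r(y)l(x)-l(x)r(y)=r(y)r(x)-r(x\bullet y)$; $l(x)\mu(y)=\mu(x\bullet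 y)+\mu(y)l(x)$; $r(x\ast y)=\mu(y)r(x)+\mu(x)r(y)$. An abelian extension of $A$ by $V$ is a Com-PreLie algebra $(\widehat A,\ast_{\widehat A},\bullet_{\widehat A})$ with a short exact sequence $0\to V\xrightarrow{i}\widehat A\xrightarrow{j}A\to0$ of Com-PreLie algebra homomorphisms, $V$ carrying the zero products; $V$ is identified with $i(V)=\ker j$. It induces the given representation if for any linear section $s$ of $j$ ($j\circ s=\mathrm{id}_A$): $\mu(x)u=s(x)\ast_{\widehat A}u$, $l(x)u=s(x)\bullet_{\widehat A}u$, $r(x)u=u\bullet_{\widehat A}s(x)$. Two pairs $(\phi,\psi),(\phi',\psi')$ of bilinear maps $A\times A\to V$ are cohomologous if there is a linear $f:A\to V$ with $\phi(x,y)-\phi'(x,y)=\mu(x)f(y)-f(x\ast y)+\mu(y)f(x)$ and $\psi(x,y)-\psi'(x,y)=l(x)f(y)-f(x\bullet y)+r(y)f(x)$ for all $x,y\in A$. $\mathrm{Aut}(A)$ is the group of Com-PreLie algebra automorphisms of $A$; $\mathrm{Aut}(V)$ is the group of linear automorphisms of $V$; $\mathrm{Aut}_V(\widehat A)$ is the group of Com-PreLie algebra automorphisms $\gamma$ of $\widehat A$ with $\gamma(V)=V$. For $\gamma\in\mathrm{Aut}_V(\widehat A)$ put $\overline\gamma=j\gamma s\in\mathrm{Aut}(A)$ and $\tau(\gamma)=(\gamma|_V,\overline\gamma)$. A pair $(\beta,\alpha)\in\mathrm{Aut}(V)\times\mathrm{Aut}(A)$ is inducible if $(\beta,\alpha)=\tau(\gamma)$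 for some $\gamma\in\mathrm{Aut}_V(\widehat A)$. $\mathcal C$ is the set of pairs $(\beta,\alpha)\in\mathrm{Aut}(V)\times\mathrm{Aut}(A)$ with $\beta(\mu(x)u)=\mu(\alpha(x))\beta(u)$, $\beta(l(x)u)=l(\alpha(x))\beta(u)$, $\beta(r(x)u)=r(\alpha(x))\beta(u)$ for all $x\in A,u\in V$. For such a pair, $(\phi,\psi)^{(\beta,\alpha)}$ is the pair $(x,y)\mapsto\big(\beta\phi(\alpha^{-1}x,\alpha^{-1}y),\ \beta\psi(\alpha^{-1}x,\alpha^{-1}y)\big)$. *)

theory Defs
  imports Complex_Main
begin

text \<open>Vector spaces over a field 'k of characteristic 0 are modelled as types of class
ab_group_add together with a scalar multiplication satisfying the vector_space locale.\<close>

definition bilinear_map ::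
  "('k::field \<Rightarrow> 'a::ab_group_add \<Rightarrow> 'a) \<Rightarrow> ('k \<Rightarrow> 'b::ab_group_add \<Rightarrow> 'b)
   \<Rightarrow> ('a \<Rightarrow> 'a \<Rightarrow> 'b) \<Rightarrow> bool" where
  "bilinear_map sA sB f \<longleftrightarrow>
     (\<forall>x. Vector_Spaces.linear sA sB (f x)) \<and> (\<forall>y. Vector_Spaces.linear sA sB (\<lambda>x. f x y))"

definition com_prelie ::
  "('k::field \<Rightarrow> 'a::ab_group_add \<Rightarrow> 'a) \<Rightarrow> ('a \<Rightarrow> 'a \<Rightarrow> 'a) \<Rightarrow> ('a \<Rightarrow> 'a \<Rightarrow> 'a) \<Rightarrow> bool" where
  "com_prelie sA mul dot \<longleftrightarrow>
     vector_space sA \<and> bilinear_map sA sA mul \<and> bilinear_map sA sA dot \<and>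
     (\<forall>x y. mul x y = mul y x) \<and>
     (\<forall>x y z. mul (mul x y) z = mul x (mul y z)) \<and>
     (\<forall>x y z. dot (dot x y) z - dot x (dot y z) = dot (dot y x) z - dot y (dot x z)) \<and>
     (\<forall>x y z. dot x (mul y z) = mul (dot x y) z + mul y (dot x z))"

definition com_prelie_hom ::
  "('k::field \<Rightarrow> 'a::ab_group_add \<Rightarrow> 'a) \<Rightarrow> ('a \<Rightarrow> 'a \<Rightarrow> 'a) \<Rightarrow> ('a \<Rightarrow> 'a \<Rightarrow> 'a) \<Rightarrow>
   ('k \<Rightarrow> 'b::ab_group_add \<Rightarrow> 'b) \<Rightarrow> ('b \<Rightarrow> 'b \<Rightarrow> 'b) \<Rightarrow> ('b \<Rightarrow> 'b \<Rightarrow> 'b) \<Rightarrow>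
   ('a \<Rightarrow> 'b) \<Rightarrow> bool" where
  "com_prelie_hom sA mulA dotA sB mulB dotB f \<longleftrightarrow>
     Vector_Spaces.linear sA sB f \<and>
     (\<forall>x y. f (mulA x y) = mulB (f x) (f y)) \<and>
     (\<forall>x y. f (dotA x y) = dotB (f x) (f y))"

definition com_prelie_rep ::
  "('k::field \<Rightarrow> 'a::ab_group_add \<Rightarrow> 'a) \<Rightarrow> ('a \<Rightarrow> 'a \<Rightarrow> 'a) \<Rightarrow> ('a \<Rightarrow> 'a \<Rightarrow> 'a) \<Rightarrow>
   ('k \<Rightarrow> 'v::ab_group_add \<Rightarrow> 'v) \<Rightarrow>
   ('a \<Rightarrow> 'v \<Rightarrow> 'v) \<Rightarrow> ('a \<Rightarrow> 'v \<Rightarrow> 'v) \<Rightarrow> ('a \<Rightarrow> 'v \<Rightarrow> 'v) \<Rightarrow> bool" where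
  "com_prelie_rep sA mul dot sV \<mu> l r \<longleftrightarrow>
     vector_space sV \<and>
     (\<forall>x. Vector_Spaces.linear sV sV (\<mu> x) \<and> Vector_Spaces.linear sV sV (l x)
          \<and> Vector_Spaces.linear sV sV (r x)) \<and>
     (\<forall>u. Vector_Spaces.linear sA sV (\<lambda>x. \<mu> x u) \<and> Vector_Spaces.linear sA sV (\<lambda>x. l x u)
          \<and> Vector_Spaces.linear sA sV (\<lambda>x. r x u)) \<and>
     (\<forall>x y u. \<mu> (mul x y) u = \<mu> x (\<mu> y u)) \<and>
     (\<forall>x y u. l (dot x y) u - l x (l y u) = l (dot y x) u - l y (l x u)) \<and>
     (\<forall>x y u. r y (l x u) - l x (r y u) = r y (r x u) - r (dot x y) u) \<and>
     (\<forall>x y u. l x (\<mu> y u) = \<mu> (dot x y) u + \<mu> y (l x u)) \<and>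
     (\<forall>x y u. r (mul x y) u = \<mu> y (r x u) + \<mu> x (r y u))"

definition abelian_extension ::
  "('k::field \<Rightarrow> 'a::ab_group_add \<Rightarrow> 'a) \<Rightarrow> ('a \<Rightarrow> 'a \<Rightarrow> 'a) \<Rightarrow> ('a \<Rightarrow> 'a \<Rightarrow> 'a) \<Rightarrow>
   ('k \<Rightarrow> 'v::ab_group_add \<Rightarrow> 'v) \<Rightarrow>
   ('k \<Rightarrow> 'h::ab_group_add \<Rightarrow> 'h) \<Rightarrow> ('h \<Rightarrow> 'h \<Rightarrow> 'h) \<Rightarrow> ('h \<Rightarrow> 'h \<Rightarrow> 'h) \<Rightarrow>
   ('v \<Rightarrow> 'h) \<Rightarrow> ('h \<Rightarrow> 'a) \<Rightarrow> bool" where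
  "abelian_extension sA mul dot sV sH mulH dotH i j \<longleftrightarrow>
     com_prelie sA mul dot \<and> com_prelie sH mulH dotH \<and> vector_space sV \<and>
     com_prelie_hom sV (\<lambda>_ _. 0) (\<lambda>_ _. 0) sH mulH dotH i \<and>
     com_prelie_hom sH mulH dotH sA mul dot j \<and>
     inj i \<and> surj j \<and> range i = {h. j h = 0}"

definition linear_section ::
  "('k::field \<Rightarrow> 'a::ab_group_add \<Rightarrow> 'a) \<Rightarrow> ('k \<Rightarrow> 'h::ab_group_add \<Rightarrow> 'h) \<Rightarrow>
   ('h \<Rightarrow> 'a) \<Rightarrow> ('a \<Rightarrow> 'h) \<Rightarrow> bool" where
  "linear_section sA sH j s \<longleftrightarrow> Vector_Spaces.linear sA sH s \<and> (\<forall>x. j (s x) = x)"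

text \<open>The extension induces the representation (V identified with i(V)).\<close>
definition induces_rep ::
  "('k::field \<Rightarrow> 'a::ab_group_add \<Rightarrow> 'a) \<Rightarrow> ('k \<Rightarrow> 'h::ab_group_add \<Rightarrow> 'h) \<Rightarrow>
   ('h \<Rightarrow> 'h \<Rightarrow> 'h) \<Rightarrow> ('h \<Rightarrow> 'h \<Rightarrow> 'h) \<Rightarrow> ('v::ab_group_add \<Rightarrow> 'h) \<Rightarrow> ('h \<Rightarrow> 'a) \<Rightarrow>
   ('a \<Rightarrow> 'v \<Rightarrow> 'v) \<Rightarrow> ('a \<Rightarrow> 'v \<Rightarrow> 'v) \<Rightarrow> ('a \<Rightarrow> 'v \<Rightarrow> 'v) \<Rightarrow> bool" where
  "induces_rep sA sH mulH dotH i j \<mu> l r \<longleftrightarrow>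
     (\<forall>s. linear_section sA sH j s \<longrightarrow>
        (\<forall>x u. i (\<mu> x u) = mulH (s x) (i u) \<and> i (l x u) = dotH (s x) (i u)
               \<and> i (r x u) = dotH (i u) (s x)))"

definition com_prelie_aut ::
  "('k::field \<Rightarrow> 'a::ab_group_add \<Rightarrow> 'a) \<Rightarrow> ('a \<Rightarrow> 'a \<Rightarrow> 'a) \<Rightarrow> ('a \<Rightarrow> 'a \<Rightarrow> 'a) \<Rightarrow>
   ('a \<Rightarrow> 'a) \<Rightarrow> bool" where
  "com_prelie_aut sA mul dot f \<longleftrightarrow> com_prelie_hom sA mul dot sA mul dot f \<and> bij f"

definition linear_aut :: "('k::field \<Rightarrow> 'v::ab_group_add \<Rightarrow> 'v) \<Rightarrow> ('v \<Rightarrow> 'v) \<Rightarrow> bool" where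
  "linear_aut sV f \<longleftrightarrow> Vector_Spaces.linear sV sV f \<and> bij f"

definition aut_V ::
  "('k::field \<Rightarrow> 'h::ab_group_add \<Rightarrow> 'h) \<Rightarrow> ('h \<Rightarrow> 'h \<Rightarrow> 'h) \<Rightarrow> ('h \<Rightarrow> 'h \<Rightarrow> 'h) \<Rightarrow>
   ('v \<Rightarrow> 'h) \<Rightarrow> ('h \<Rightarrow> 'h) \<Rightarrow> bool" where
  "aut_V sH mulH dotH i g \<longleftrightarrow> com_prelie_aut sH mulH dotH g \<and> g ` range i = range i"

text \<open>tau(gamma) = (gamma restricted to V, j o gamma o s).\<close>
definition inducible ::
  "('k::field \<Rightarrow> 'h::ab_group_add \<Rightarrow> 'h) \<Rightarrow> ('h \<Rightarrow> 'h \<Rightarrow> 'h) \<Rightarrow> ('h \<Rightarrow> 'h \<Rightarrow> 'h) \<Rightarrow>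
   ('v::ab_group_add \<Rightarrow> 'h) \<Rightarrow> ('h \<Rightarrow> 'a::ab_group_add) \<Rightarrow> ('a \<Rightarrow> 'h) \<Rightarrow>
   ('v \<Rightarrow> 'v) \<Rightarrow> ('a \<Rightarrow> 'a) \<Rightarrow> bool" where
  "inducible sH mulH dotH i j s \<beta> \<alpha> \<longleftrightarrow>
     (\<exists>g. aut_V sH mulH dotH i g \<and> (\<forall>u. g (i u) = i (\<beta> u)) \<and> (\<forall>x. j (g (s x)) = \<alpha> x))"

definition compat_pairs ::
  "('a \<Rightarrow> 'v \<Rightarrow> 'v) \<Rightarrow> ('a \<Rightarrow> 'v \<Rightarrow> 'v) \<Rightarrow> ('a \<Rightarrow> 'v \<Rightarrow> 'v) \<Rightarrow>
   ('v \<Rightarrow> 'v) \<Rightarrow> ('a \<Rightarrow> 'a) \<Rightarrow> bool" where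
  "compat_pairs \<mu> l r \<beta> \<alpha> \<longleftrightarrow>
     (\<forall>x u. \<beta> (\<mu> x u) = \<mu> (\<alpha> x) (\<beta> u) \<and> \<beta> (l x u) = l (\<alpha> x) (\<beta> u)
            \<and> \<beta> (r x u) = r (\<alpha> x) (\<beta> u))"

definition cohomologous ::
  "('k::field \<Rightarrow> 'a::ab_group_add \<Rightarrow> 'a) \<Rightarrow> ('a \<Rightarrow> 'a \<Rightarrow> 'a) \<Rightarrow> ('a \<Rightarrow> 'a \<Rightarrow> 'a) \<Rightarrow>
   ('k \<Rightarrow> 'v::ab_group_add \<Rightarrow> 'v) \<Rightarrow>
   ('a \<Rightarrow> 'v \<Rightarrow> 'v) \<Rightarrow> ('a \<Rightarrow> 'v \<Rightarrow> 'v) \<Rightarrow> ('a \<Rightarrow> 'v \<Rightarrow> 'v) \<Rightarrow>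
   ('a \<Rightarrow> 'a \<Rightarrow> 'v) \<Rightarrow> ('a \<Rightarrow> 'a \<Rightarrow> 'v) \<Rightarrow> ('a \<Rightarrow> 'a \<Rightarrow> 'v) \<Rightarrow> ('a \<Rightarrow> 'a \<Rightarrow> 'v) \<Rightarrow> bool" where
  "cohomologous sA mul dot sV \<mu> l r \<phi> \<psi> \<phi>' \<psi>' \<longleftrightarrow>
     (\<exists>f. Vector_Spaces.linear sA sV f \<and>
       (\<forall>x y. \<phi> x y - \<phi>' x y = \<mu> x (f y) - f (mul x y) + \<mu> y (f x)) \<and>
       (\<forall>x y. \<psi> x y - \<psi>' x y = l x (f y) - f (dot x y) + r y (f x)))"

definition cocycle_phi ::
  "('h::ab_group_add \<Rightarrow> 'h \<Rightarrow> 'h) \<Rightarrow> ('a \<Rightarrow> 'a \<Rightarrow> 'a) \<Rightarrow> ('v \<Rightarrow> 'h) \<Rightarrow> ('a \<Rightarrow> 'h) \<Rightarrow>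
   'a \<Rightarrow> 'a \<Rightarrow> 'v" where
  "cocycle_phi mulH mul i s x y = inv i (mulH (s x) (s y) - s (mul x y))"

definition cocycle_psi ::
  "('h::ab_group_add \<Rightarrow> 'h \<Rightarrow> 'h) \<Rightarrow> ('a \<Rightarrow> 'a \<Rightarrow> 'a) \<Rightarrow> ('v \<Rightarrow> 'h) \<Rightarrow> ('a \<Rightarrow> 'h) \<Rightarrow>
   'a \<Rightarrow> 'a \<Rightarrow> 'v" where
  "cocycle_psi dotH dot i s x y = inv i (dotH (s x) (s y) - s (dot x y))"

definition twist :: "('v \<Rightarrow> 'v) \<Rightarrow> ('a \<Rightarrow> 'a) \<Rightarrow> ('a \<Rightarrow> 'a \<Rightarrow> 'v) \<Rightarrow> 'a \<Rightarrow> 'a \<Rightarrow> 'v" where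
  "twist \<beta> \<alpha> \<phi> x y = \<beta> (\<phi> (inv \<alpha> x) (inv \<alpha> y))"

end

theory Submission
  imports Defs
begin

lemma lin_facts:
  assumes "Vector_Spaces.linear s1 s2 f"
  shows "f (x + y) = f x + f y" "f 0 = 0" "f (x - y) = f x - f y" "f (- x) = - f x"
    "f (s1 c x) = s2 c (f x)"
proof -
  have a: "\<forall>x y. f (x + y) = f x + f y" and sc: "\<forall>c x. f (s1 c x) = s2 c (f x)"
    using assms unfolding Vector_Spaces.linear_iff by auto
  interpret additive f using a by unfold_locales auto
  show "f (x + y) = f x + f y" "f 0 = 0" "f (x - y) = f x - f y" "f (- x) = - f x"
    "f (s1 c x) = s2 c (f x)" using a sc zero diff minus by auto
qed

lemma lin_vs:
  assumes "Vector_Spaces.linear s1 s2 f"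
  shows "vector_space s1" "vector_space s2"
  using assms unfolding Vector_Spaces.linear_iff by auto

theorem theorem4p2:
  fixes sA :: "'k::field_char_0 \<Rightarrow> 'a::ab_group_add \<Rightarrow> 'a"
    and mul dot :: "'a \<Rightarrow> 'a \<Rightarrow> 'a"
    and sV :: "'k \<Rightarrow> 'v::ab_group_add \<Rightarrow> 'v"
    and \<mu> l r :: "'a \<Rightarrow> 'v \<Rightarrow> 'v"
    and sH :: "'k \<Rightarrow> 'h::ab_group_add \<Rightarrow> 'h"
    and mulH dotH :: "'h \<Rightarrow> 'h \<Rightarrow> 'h"
    and i :: "'v \<Rightarrow> 'h" and j :: "'h \<Rightarrow> 'a" and s :: "'a \<Rightarrow> 'h"
    and \<beta> :: "'v \<Rightarrow> 'v" and \<alpha> :: "'a \<Rightarrow> 'a"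
  assumes "com_prelie sA mul dot"
    and "com_prelie_rep sA mul dot sV \<mu> l r"
    and "abelian_extension sA mul dot sV sH mulH dotH i j"
    and "induces_rep sA sH mulH dotH i j \<mu> l r"
    and "linear_section sA sH j s"
    and "linear_aut sV \<beta>"
    and "com_prelie_aut sA mul dot \<alpha>"
  shows "inducible sH mulH dotH i j s \<beta> \<alpha> \<longleftrightarrow>
           compat_pairs \<mu> l r \<beta> \<alpha> \<and>
           cohomologous sA mul dot sV \<mu> l r
             (twist \<beta> \<alpha> (cocycle_phi mulH mul i s)) (twist \<beta> \<alpha> (cocycle_psi dotH dot i s))
             (cocycle_phi mulH mul i s) (cocycle_psi dotH dot i s)"
proof -
  note A = assms
  have ext: "com_prelie sH mulH dotH" "vector_space sV"
     "com_prelie_hom sV (\<lambda>_ _. 0) (\<lambda>_ _. 0) sH mulH dotH i"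
     "com_prelie_hom sH mulH dotH sA mul dot j"
     "inj i" "surj j" "range i = {h. j h = 0}"
    using A(3) unfolding abelian_extension_def by auto
  have iL: "Vector_Spaces.linear sV sH i" and i_mul0: "\<And>a b. i 0 = mulH (i a) (i b)"
    and i_dot0: "\<And>a b. i 0 = dotH (i a) (i b)"
    using ext(3) unfolding com_prelie_hom_def by auto
  have jL: "Vector_Spaces.linear sH sA j" and jmul: "\<And>a b. j (mulH a b) = mul (j a) (j b)"
    and jdot: "\<And>a b. j (dotH a b) = dot (j a) (j b)"
    using ext(4) unfolding com_prelie_hom_def by auto
  have sL: "Vector_Spaces.linear sA sH s" and js: "\<And>x. j (s x) = x"
    using A(5) unfolding linear_section_def by auto
  have \<beta>L: "Vector_Spaces.linear sV sV \<beta>" and \<beta>b: "bij \<beta>"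
    using A(6) unfolding linear_aut_def by auto
  have \<alpha>L: "Vector_Spaces.linear sA sA \<alpha>" and \<alpha>b: "bij \<alpha>"
    and \<alpha>mul: "\<And>x y. \<alpha> (mul x y) = mul (\<alpha> x) (\<alpha> y)"
    and \<alpha>dot: "\<And>x y. \<alpha> (dot x y) = dot (\<alpha> x) (\<alpha> y)"
    using A(7) unfolding com_prelie_aut_def com_prelie_hom_def by auto
  have Hbil: "bilinear_map sH sH mulH" "bilinear_map sH sH dotH" and Hcomm: "\<And>a b. mulH a b = mulH b a"
    and vsH: "vector_space sH"
    using ext(1) unfolding com_prelie_def by auto
  have mL1: "\<And>a. Vector_Spaces.linear sH sH (mulH a)" and mL2: "\<And>b. Vector_Spaces.linear sH sH (\<lambda>a. mulH a b)"
    and dL1: "\<And>a. Vector_Spaces.linear sH sH (dotH a)" and dL2: "\<And>b. Vector_Spaces.linear sH sH (\<lambda>a. dotH a b)"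
    using Hbil unfolding bilinear_map_def by auto
  have repV: "\<And>x. Vector_Spaces.linear sV sV (\<mu> x) \<and> Vector_Spaces.linear sV sV (l x)
          \<and> Vector_Spaces.linear sV sV (r x)"
    using A(2) unfolding com_prelie_rep_def by auto
  have \<mu>L: "\<And>x. Vector_Spaces.linear sV sV (\<mu> x)" and lL: "\<And>x. Vector_Spaces.linear sV sV (l x)"
    and rL: "\<And>x. Vector_Spaces.linear sV sV (r x)" using repV by auto
  have ind: "\<And>x u. i (\<mu> x u) = mulH (s x) (i u) \<and> i (l x u) = dotH (s x) (i u) \<and> i (r x u) = dotH (i u) (s x)"
    using A(4) A(5) unfolding induces_rep_def by blast
  note iF = lin_facts[OF iL] and jF = lin_facts[OF jL] and sF = lin_facts[OF sL]
    and \<alpha>F = lin_facts[OF \<alpha>L] and \<beta>F = lin_facts[OF \<beta>L]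
    and mF1 = lin_facts[OF mL1] and mF2 = lin_facts[OF mL2]
    and dF1 = lin_facts[OF dL1] and dF2 = lin_facts[OF dL2]
    and \<mu>F = lin_facts[OF \<mu>L] and lF = lin_facts[OF lL] and rF = lin_facts[OF rL]
  have imul: "\<And>a b. mulH (i a) (i b) = 0" and idot: "\<And>a b. dotH (i a) (i b) = 0"
    using i_mul0 i_dot0 iF(2) by metis+
  have rep: "\<And>x u. mulH (s x) (i u) = i (\<mu> x u)" "\<And>x u. mulH (i u) (s x) = i (\<mu> x u)"
    "\<And>x u. dotH (s x) (i u) = i (l x u)" "\<And>x u. dotH (i u) (s x) = i (r x u)"
    using ind Hcomm by metis+
  have ji: "\<And>u. j (i u) = 0" using ext(7) by auto
  have rng: "i (inv i h) = h" if "j h = 0" for h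
  proof -
    have "h \<in> range i" using ext(7) that by simp
    then show ?thesis by (rule f_inv_into_f)
  qed
  have invi: "\<And>u. inv i (i u) = u" using ext(5) by (rule inv_f_f)
  have iinj: "\<And>a b. i a = i b \<Longrightarrow> a = b" using ext(5) by (rule injD)
  define \<phi> where "\<phi> = cocycle_phi mulH mul i s"
  define \<psi> where "\<psi> = cocycle_psi dotH dot i s"
  have phi: "\<And>x y. i (\<phi> x y) = mulH (s x) (s y) - s (mul x y)"
    unfolding \<phi>_def cocycle_phi_def by (rule rng) (simp add: jF jmul js)
  have psi: "\<And>x y. i (\<psi> x y) = dotH (s x) (s y) - s (dot x y)"
    unfolding \<psi>_def cocycle_psi_def by (rule rng) (simp add: jF jdot js)
  have expm: "\<And>x y a b. mulH (s x + i a) (s y + i b) = i (\<phi> x y + \<mu> x b + \<mu> y a) + s (mul x y)"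
    by (simp add: mF1 mF2 rep imul iF phi)
  have expd: "\<And>x y a b. dotH (s x + i a) (s y + i b) = i (\<psi> x y + l x b + r y a) + s (dot x y)"
    by (simp add: dF1 dF2 rep idot iF psi)
  define p where "p h = inv i (h - s (j h))" for h
  have pdec: "i (p h) = h - s (j h)" for h
    unfolding p_def by (rule rng) (simp add: jF js)
  have hdec: "h = s (j h) + i (p h)" for h using pdec[of h] by simp
  have p_si: "p (s x + i u) = u" for x u
    by (rule iinj) (simp add: pdec jF js ji)
  have j_si: "j (s x + i u) = x" for x u by (simp add: jF js ji)
  have p_i: "p (i u) = u" for u using p_si[of 0 u] by (simp add: sF)
  have vsV: "vector_space sV" by (rule ext(2))
  have vsA: "vector_space sA" using lin_vs[OF sL] by simp
  have modH: "module sH" using vsH by (simp add: module_iff_vector_space)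
  have modV: "module sV" using vsV by (simp add: module_iff_vector_space)
  have pL: "Vector_Spaces.linear sH sV p"
    unfolding Vector_Spaces.linear_iff
  proof (intro conjI allI vsH vsV)
    fix a b show "p (a + b) = p a + p b"
      by (rule iinj) (simp add: iF pdec jF sF)
  next
    fix c a show "p (sH c a) = sV c (p a)"
      by (rule iinj) (simp add: iF pdec jF sF module.scale_right_diff_distrib[OF modH])
  qed
  note pF = lin_facts[OF pL]
  have inv_lin: "Vector_Spaces.linear sA sA (inv \<alpha>)"
    unfolding Vector_Spaces.linear_iff
  proof (intro conjI allI vsA)
    have sj: "\<alpha> (inv \<alpha> y) = y" for y using \<alpha>b by (simp add: bij_is_surj surj_f_inv_f)
    have ij: "inv \<alpha> (\<alpha> y) = y" for y using \<alpha>b by (simp add: bij_is_inj inv_f_f)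
    fix a b
    have "\<alpha> (inv \<alpha> a + inv \<alpha> b) = a + b" by (simp add: \<alpha>F sj)
    then show "inv \<alpha> (a + b) = inv \<alpha> a + inv \<alpha> b" using ij by metis
  next
    have sj: "\<alpha> (inv \<alpha> y) = y" for y using \<alpha>b by (simp add: bij_is_surj surj_f_inv_f)
    have ij: "inv \<alpha> (\<alpha> y) = y" for y using \<alpha>b by (simp add: bij_is_inj inv_f_f)
    fix c a
    have "\<alpha> (sA c (inv \<alpha> a)) = sA c a" by (simp add: \<alpha>F sj)
    then show "inv \<alpha> (sA c a) = sA c (inv \<alpha> a)" using ij by metis
  qed
  have \<alpha>sj: "\<alpha> (inv \<alpha> y) = y" for y using \<alpha>b by (simp add: bij_is_surj surj_f_inv_f)
  have \<alpha>ij: "inv \<alpha> (\<alpha> y) = y" for y using \<alpha>b by (simp add: bij_is_inj inv_f_f)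
  have \<beta>sj: "\<beta> (inv \<beta> y) = y" for y using \<beta>b by (simp add: bij_is_surj surj_f_inv_f)
  have \<beta>inj: "\<beta> a = \<beta> b \<Longrightarrow> a = b" for a b using bij_is_inj[OF \<beta>b] by (rule injD)
  have \<alpha>inj: "\<alpha> a = \<alpha> b \<Longrightarrow> a = b" for a b using bij_is_inj[OF \<alpha>b] by (rule injD)
  show ?thesis
  proof
    assume "inducible sH mulH dotH i j s \<beta> \<alpha>"
    then obtain g where gA: "aut_V sH mulH dotH i g" and gi: "\<And>u. g (i u) = i (\<beta> u)"
      and gs: "\<And>x. j (g (s x)) = \<alpha> x"
      unfolding inducible_def by blast
    have gL: "Vector_Spaces.linear sH sH g" and gmul: "\<And>a b. g (mulH a b) = mulH (g a) (g b)"
      and gdot: "\<And>a b. g (dotH a b) = dotH (g a) (g b)"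
      using gA unfolding aut_V_def com_prelie_aut_def com_prelie_hom_def by auto
    note gF = lin_facts[OF gL]
    define lam where "lam = p \<circ> g \<circ> s"
    have gsx: "g (s x) = s (\<alpha> x) + i (lam x)" for x
      using hdec[of "g (s x)"] by (simp add: lam_def gs)
    have compat: "compat_pairs \<mu> l r \<beta> \<alpha>"
      unfolding compat_pairs_def
    proof (intro allI conjI)
      fix x u
      show "\<beta> (\<mu> x u) = \<mu> (\<alpha> x) (\<beta> u)"
        apply (rule iinj)
        apply (simp only: gi[symmetric] rep(1)[symmetric] gmul)
        by (simp add: gsx gi mF2 rep imul)
      show "\<beta> (l x u) = l (\<alpha> x) (\<beta> u)"
        apply (rule iinj)
        apply (simp only: gi[symmetric] rep(3)[symmetric] gdot)
        by (simp add: gsx gi dF2 rep idot)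
      show "\<beta> (r x u) = r (\<alpha> x) (\<beta> u)"
        apply (rule iinj)
        apply (simp only: gi[symmetric] rep(4)[symmetric] gdot)
        by (simp add: gsx gi dF1 rep idot)
    qed
    have kphi: "\<beta> (\<phi> a b) = \<phi> (\<alpha> a) (\<alpha> b) + \<mu> (\<alpha> a) (lam b) + \<mu> (\<alpha> b) (lam a) - lam (mul a b)" for a b
    proof (rule iinj)
      have "i (\<beta> (\<phi> a b)) = g (i (\<phi> a b))" by (simp add: gi)
      also have "\<dots> = mulH (g (s a)) (g (s b)) - g (s (mul a b))" by (simp add: phi gF gmul)
      also have "\<dots> = i (\<phi> (\<alpha> a) (\<alpha> b) + \<mu> (\<alpha> a) (lam b) + \<mu> (\<alpha> b) (lam a)) + s (mul (\<alpha> a) (\<alpha> b))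
          - (s (\<alpha> (mul a b)) + i (lam (mul a b)))" by (simp only: gsx expm)
      also have "\<dots> = i (\<phi> (\<alpha> a) (\<alpha> b) + \<mu> (\<alpha> a) (lam b) + \<mu> (\<alpha> b) (lam a) - lam (mul a b))"
        by (simp add: \<alpha>mul iF)
      finally show "i (\<beta> (\<phi> a b)) = i (\<phi> (\<alpha> a) (\<alpha> b) + \<mu> (\<alpha> a) (lam b) + \<mu> (\<alpha> b) (lam a) - lam (mul a b))" .
    qed
    have kpsi: "\<beta> (\<psi> a b) = \<psi> (\<alpha> a) (\<alpha> b) + l (\<alpha> a) (lam b) + r (\<alpha> b) (lam a) - lam (dot a b)" for a b
    proof (rule iinj)
      have "i (\<beta> (\<psi> a b)) = g (i (\<psi> a b))" by (simp add: gi)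
      also have "\<dots> = dotH (g (s a)) (g (s b)) - g (s (dot a b))" by (simp add: psi gF gdot)
      also have "\<dots> = i (\<psi> (\<alpha> a) (\<alpha> b) + l (\<alpha> a) (lam b) + r (\<alpha> b) (lam a)) + s (dot (\<alpha> a) (\<alpha> b))
          - (s (\<alpha> (dot a b)) + i (lam (dot a b)))" by (simp only: gsx expd)
      also have "\<dots> = i (\<psi> (\<alpha> a) (\<alpha> b) + l (\<alpha> a) (lam b) + r (\<alpha> b) (lam a) - lam (dot a b))"
        by (simp add: \<alpha>dot iF)
      finally show "i (\<beta> (\<psi> a b)) = i (\<psi> (\<alpha> a) (\<alpha> b) + l (\<alpha> a) (lam b) + r (\<alpha> b) (lam a) - lam (dot a b))" .
    qed
    define f where "f = lam \<circ> inv \<alpha>"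
    have fL: "Vector_Spaces.linear sA sV f"
      unfolding f_def lam_def
      by (rule Vector_Spaces.linear_compose[OF inv_lin Vector_Spaces.linear_compose[OF sL
          Vector_Spaces.linear_compose[OF gL pL]]])
    have coh: "cohomologous sA mul dot sV \<mu> l r (twist \<beta> \<alpha> \<phi>) (twist \<beta> \<alpha> \<psi>) \<phi> \<psi>"
      unfolding cohomologous_def
    proof (intro exI[of _ f] conjI allI fL)
      fix x y
      have m: "mul x y = \<alpha> (mul (inv \<alpha> x) (inv \<alpha> y))" "dot x y = \<alpha> (dot (inv \<alpha> x) (inv \<alpha> y))"
        by (simp_all add: \<alpha>mul \<alpha>dot \<alpha>sj)
      show "twist \<beta> \<alpha> \<phi> x y - \<phi> x y = \<mu> x (f y) - f (mul x y) + \<mu> y (f x)"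
        unfolding twist_def kphi f_def by (simp add: \<alpha>sj m(1) \<alpha>ij)
      show "twist \<beta> \<alpha> \<psi> x y - \<psi> x y = l x (f y) - f (dot x y) + r y (f x)"
        unfolding twist_def kpsi f_def by (simp add: \<alpha>sj m(2) \<alpha>ij)
    qed
    show "compat_pairs \<mu> l r \<beta> \<alpha> \<and> cohomologous sA mul dot sV \<mu> l r
             (twist \<beta> \<alpha> (cocycle_phi mulH mul i s)) (twist \<beta> \<alpha> (cocycle_psi dotH dot i s))
             (cocycle_phi mulH mul i s) (cocycle_psi dotH dot i s)"
      using compat coh unfolding \<phi>_def \<psi>_def by simp
  next
    assume "compat_pairs \<mu> l r \<beta> \<alpha> \<and> cohomologous sA mul dot sV \<mu> l r
             (twist \<beta> \<alpha> (cocycle_phi mulH mul i s)) (twist \<beta> \<alpha> (cocycle_psi dotH dot i s))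
             (cocycle_phi mulH mul i s) (cocycle_psi dotH dot i s)"
    then have compat: "\<And>x u. \<beta> (\<mu> x u) = \<mu> (\<alpha> x) (\<beta> u) \<and> \<beta> (l x u) = l (\<alpha> x) (\<beta> u)
            \<and> \<beta> (r x u) = r (\<alpha> x) (\<beta> u)"
      and "cohomologous sA mul dot sV \<mu> l r (twist \<beta> \<alpha> \<phi>) (twist \<beta> \<alpha> \<psi>) \<phi> \<psi>"
      unfolding compat_pairs_def \<phi>_def \<psi>_def by auto
    then obtain f where fL: "Vector_Spaces.linear sA sV f"
      and c1: "\<And>x y. twist \<beta> \<alpha> \<phi> x y - \<phi> x y = \<mu> x (f y) - f (mul x y) + \<mu> y (f x)"
      and c2: "\<And>x y. twist \<beta> \<alpha> \<psi> x y - \<psi> x y = l x (f y) - f (dot x y) + r y (f x)"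
      unfolding cohomologous_def by blast
    note fF = lin_facts[OF fL]
    have c1': "\<beta> (\<phi> a b) = \<phi> (\<alpha> a) (\<alpha> b) + \<mu> (\<alpha> a) (f (\<alpha> b)) - f (mul (\<alpha> a) (\<alpha> b)) + \<mu> (\<alpha> b) (f (\<alpha> a))" for a b
      using c1[of "\<alpha> a" "\<alpha> b"] unfolding twist_def \<alpha>ij by (simp add: algebra_simps)
    have c2': "\<beta> (\<psi> a b) = \<psi> (\<alpha> a) (\<alpha> b) + l (\<alpha> a) (f (\<alpha> b)) - f (dot (\<alpha> a) (\<alpha> b)) + r (\<alpha> b) (f (\<alpha> a))" for a b
      using c2[of "\<alpha> a" "\<alpha> b"] unfolding twist_def \<alpha>ij by (simp add: algebra_simps)
    define g where "g h = s (\<alpha> (j h)) + i (\<beta> (p h) + f (\<alpha> (j h)))" for h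
    have gsi: "g (s x + i u) = s (\<alpha> x) + i (\<beta> u + f (\<alpha> x))" for x u
      unfolding g_def by (simp only: j_si p_si)
    have gi: "g (i u) = i (\<beta> u)" for u
      unfolding g_def by (simp add: ji p_i \<alpha>F sF fF)
    have jg: "j (g h) = \<alpha> (j h)" for h
      unfolding g_def by (simp add: jF js ji)
    have gL: "Vector_Spaces.linear sH sH g"
      unfolding Vector_Spaces.linear_iff
    proof (intro conjI allI vsH)
      fix a b show "g (a + b) = g a + g b"
        unfolding g_def by (simp add: jF \<alpha>F sF pF \<beta>F fF iF algebra_simps)
    next
      fix c a show "g (sH c a) = sH c (g a)"
        unfolding g_def by (simp add: jF \<alpha>F sF pF \<beta>F fF iF module.scale_right_distrib[OF modH])
    qed
    have gmul: "g (mulH a b) = mulH (g a) (g b)" for a b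
    proof -
      have "mulH a b = mulH (s (j a) + i (p a)) (s (j b) + i (p b))" using hdec by metis
      also have "\<dots> = s (mul (j a) (j b)) + i (\<phi> (j a) (j b) + \<mu> (j a) (p b) + \<mu> (j b) (p a))"
        by (subst expm, rule add.commute)
      finally have e1: "g (mulH a b) = s (\<alpha> (mul (j a) (j b))) + i (\<beta> (\<phi> (j a) (j b) + \<mu> (j a) (p b) + \<mu> (j b) (p a)) + f (\<alpha> (mul (j a) (j b))))"
        by (simp add: gsi)
      have "mulH (g a) (g b) = i (\<phi> (\<alpha> (j a)) (\<alpha> (j b)) + \<mu> (\<alpha> (j a)) (\<beta> (p b) + f (\<alpha> (j b))) + \<mu> (\<alpha> (j b)) (\<beta> (p a) + f (\<alpha> (j a)))) + s (mul (\<alpha> (j a)) (\<alpha> (j b)))"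
        unfolding g_def by (rule expm)
      then show ?thesis using e1
        by (simp add: \<alpha>mul \<beta>F c1' compat \<mu>F algebra_simps)
    qed
    have gdot: "g (dotH a b) = dotH (g a) (g b)" for a b
    proof -
      have "dotH a b = dotH (s (j a) + i (p a)) (s (j b) + i (p b))" using hdec by metis
      also have "\<dots> = s (dot (j a) (j b)) + i (\<psi> (j a) (j b) + l (j a) (p b) + r (j b) (p a))"
        by (subst expd, rule add.commute)
      finally have e1: "g (dotH a b) = s (\<alpha> (dot (j a) (j b))) + i (\<beta> (\<psi> (j a) (j b) + l (j a) (p b) + r (j b) (p a)) + f (\<alpha> (dot (j a) (j b))))"
        by (simp add: gsi)
      have "dotH (g a) (g b) = i (\<psi> (\<alpha> (j a)) (\<alpha> (j b)) + l (\<alpha> (j a)) (\<beta> (p b) + f (\<alpha> (j b))) + r (\<alpha> (j b)) (\<beta> (p a) + f (\<alpha> (j a)))) + s (dot (\<alpha> (j a)) (\<alpha> (j b)))"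
        unfolding g_def by (rule expd)
      then show ?thesis using e1
        by (simp add: \<alpha>dot \<beta>F c2' compat lF rF algebra_simps)
    qed
    have ginj: "inj g"
    proof (rule injI)
      fix a b assume e: "g a = g b"
      then have ja: "j a = j b" using jg \<alpha>inj by metis
      have "i (\<beta> (p a) + f (\<alpha> (j a))) = i (\<beta> (p b) + f (\<alpha> (j b)))"
        using e unfolding g_def ja by simp
      then have "\<beta> (p a) + f (\<alpha> (j a)) = \<beta> (p b) + f (\<alpha> (j a))" using ja by (metis iinj)
      then have "\<beta> (p a) = \<beta> (p b)" by simp
      then have "p a = p b" by (rule \<beta>inj)
      then show "a = b" using hdec ja by metis
    qed
    have gsurj: "surj g"
    proof (rule surjI)
      fix h
      show "g (s (inv \<alpha> (j h)) + i (inv \<beta> (p h - f (j h)))) = h"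
        unfolding gsi \<alpha>sj \<beta>sj by (metis hdec add_diff_cancel_right' diff_add_cancel iF(1))
    qed
    have gimg: "g ` range i = range i"
    proof
      show "g ` range i \<subseteq> range i" using gi by auto
      show "range i \<subseteq> g ` range i"
      proof
        fix h assume "h \<in> range i"
        then obtain u where "h = i u" by auto
        then have "h = g (i (inv \<beta> u))" using gi \<beta>sj by simp
        then show "h \<in> g ` range i" by auto
      qed
    qed
    have "aut_V sH mulH dotH i g"
      unfolding aut_V_def com_prelie_aut_def com_prelie_hom_def bij_def
      using gL gmul gdot ginj gsurj gimg by blast
    moreover have "j (g (s x)) = \<alpha> x" for x by (simp add: jg js)
    ultimately show "inducible sH mulH dotH i j s \<beta> \<alpha>"
      unfolding inducible_def using gi by blast
  qed
qed

end
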